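(* A digraph $D$ of order $n$ is minimally strong subgraph $(2,n-2)$-arc-connected if and only if $D$ is obtained from the complete digraph $\overleftrightarrow{K}_n$ by deleting an arc set $M$ such that $\overleftrightarrow{K}_n[M]$ is a union of vertex-disjoint cycles which cover all but at most one vertex of $\overleftrightarrow{K}_n$.
   Context: Digraphs are finite, without loops or parallel arcs; cycles are directed cycles, including 2-cycles. $\overleftrightarrow{K}_n$ is the complete digraph on $n$ vertices; $\overleftrightarrow{K}_n[M]$ is the subdigraph formed by the arcs of $M$ and their end-vertices. For $S\subseteq V(D)$, $\lambda_S(D)$ is the maximum number of pairwise arc-disjoint strong subgraphs of $D$ containing $S$, and $\lambda_k(D)=\min\{\lambda_S(D): S\subseteq V(D), |S|=k\}$. $D$ is minimally strong subgraph $(k,\ell)$-arc-connected if $\lambda_k(D)\ge\ell$ but $\lambda_k(D-e)\le \ell-1$ for every arc $e$ of $D$. *)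

theory Defs
  imports Main
begin

definition digraph :: "'a set \<Rightarrow> ('a \<times> 'a) set \<Rightarrow> bool" where
  "digraph V A \<longleftrightarrow> finite V \<and> A \<subseteq> V \<times> V \<and> (\<forall>(u,v)\<in>A. u \<noteq> v)"

definition complete_arcs :: "'a set \<Rightarrow> ('a \<times> 'a) set" where
  "complete_arcs V = {(u,v). u \<in> V \<and> v \<in> V \<and> u \<noteq> v}"

definition strong_subgraph :: "'a set \<Rightarrow> ('a \<times> 'a) set \<Rightarrow> 'a set \<times> ('a \<times> 'a) set \<Rightarrow> bool" where
  "strong_subgraph V A H \<longleftrightarrow>
     fst H \<subseteq> V \<and> snd H \<subseteq> A \<and> snd H \<subseteq> fst H \<times> fst H \<and>
     (\<forall>u\<in>fst H. \<forall>v\<in>fst H. (u,v) \<in> (snd H)\<^sup>*)"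

definition lambda_S :: "'a set \<Rightarrow> ('a \<times> 'a) set \<Rightarrow> 'a set \<Rightarrow> nat" where
  "lambda_S V A S = Max {k. \<exists>H :: nat \<Rightarrow> 'a set \<times> ('a \<times> 'a) set.
      (\<forall>i<k. strong_subgraph V A (H i) \<and> S \<subseteq> fst (H i)) \<and>
      (\<forall>i<k. \<forall>j<k. i \<noteq> j \<longrightarrow> snd (H i) \<inter> snd (H j) = {})}"

definition lambda_k :: "'a set \<Rightarrow> ('a \<times> 'a) set \<Rightarrow> nat \<Rightarrow> nat" where
  "lambda_k V A k = Min (lambda_S V A ` {S. S \<subseteq> V \<and> card S = k})"

text \<open>Minimally strong subgraph (k,l)-arc-connected; "\<le> l - 1" is written "< l".\<close>
definition min_strong_arc_conn :: "'a set \<Rightarrow> ('a \<times> 'a) set \<Rightarrow> nat \<Rightarrow> nat \<Rightarrow> bool" where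
  "min_strong_arc_conn V A k l \<longleftrightarrow>
     lambda_k V A k \<ge> l \<and> (\<forall>e\<in>A. lambda_k V (A - {e}) k < l)"

text \<open>A (directed) cycle given by a list of distinct vertices v0 ... v(m-1), m \<ge> 2
 (2-cycles allowed), with arcs (v_i, v_(i+1 mod m)).\<close>
definition is_cycle :: "'a set \<Rightarrow> 'a list \<Rightarrow> bool" where
  "is_cycle V vs \<longleftrightarrow> distinct vs \<and> length vs \<ge> 2 \<and> set vs \<subseteq> V"

definition cycle_arcs :: "'a list \<Rightarrow> ('a \<times> 'a) set" where
  "cycle_arcs vs = {(vs ! i, vs ! ((i + 1) mod length vs)) | i. i < length vs}"

definition disjoint_cycles_cover :: "'a set \<Rightarrow> ('a \<times> 'a) set \<Rightarrow> bool" where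
  "disjoint_cycles_cover V M \<longleftrightarrow>
     (\<exists>C :: 'a list set. finite C \<and> (\<forall>c\<in>C. is_cycle V c) \<and>
        (\<forall>c\<in>C. \<forall>c'\<in>C. c \<noteq> c' \<longrightarrow> set c \<inter> set c' = {}) \<and>
        M = (\<Union>c\<in>C. cycle_arcs c) \<and>
        card (V - (\<Union>c\<in>C. set c)) \<le> 1)"

end

theory Submission
  imports Defs "HOL-Combinatorics.Orbits"
begin


definition fwd :: "('a \<Rightarrow> 'a \<Rightarrow> bool) \<Rightarrow> 'a \<Rightarrow> 'a \<Rightarrow> 'a \<Rightarrow> ('a \<times> 'a) set" where
"fwd m x y z = (if m x z then {(x,y)} else if m z y then
   (if (\<exists>a. m x a \<and> a \<noteq> y) then {(x,z),(z,THE a. m x a),(THE a. m x a,y)} else {(x,y)})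
   else {(x,z),(z,y)})"

locale misscond =
  fixes V :: "'a set" and m :: "'a \<Rightarrow> 'a \<Rightarrow> bool" and x y :: 'a
  assumes mV: "\<And>u v. m u v \<Longrightarrow> u \<in> V \<and> v \<in> V \<and> u \<noteq> v"
    and mo: "\<And>u v w. m u v \<Longrightarrow> m u w \<Longrightarrow> v = w"
    and mi: "\<And>u v w. m v u \<Longrightarrow> m w u \<Longrightarrow> v = w"
    and xV: "x \<in> V" and yV: "y \<in> V" and xy: "x \<noteq> y"
begin

lemma the_a: "m x a \<Longrightarrow> (THE a. m x a) = a"
  using mo by blast

lemma fwd_cases:
  assumes "z \<in> V - {x,y}"
  shows "(m x z \<and> fwd m x y z = {(x,y)}) \<or>
         (\<not> m x z \<and> m z y \<and> (\<exists>a. m x a \<and> a \<noteq> y \<and> fwd m x y z = {(x,z),(z,a),(a,y)})) \<or>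
         (\<not> m x z \<and> m z y \<and> \<not>(\<exists>a. m x a \<and> a \<noteq> y) \<and> fwd m x y z = {(x,y)}) \<or>
         (\<not> m x z \<and> \<not> m z y \<and> fwd m x y z = {(x,z),(z,y)})"
  unfolding fwd_def using the_a by auto

lemma fwd_casesE:
  assumes "z \<in> V - {x,y}"
  obtains (A) "m x z" "fwd m x y z = {(x,y)}"
  | (B) a where "\<not> m x z" "m z y" "m x a" "a \<noteq> y" "fwd m x y z = {(x,z),(z,a),(a,y)}"
  | (C) "\<not> m x z" "m z y" "\<And>a. m x a \<Longrightarrow> a = y" "fwd m x y z = {(x,y)}"
  | (D) "\<not> m x z" "\<not> m z y" "fwd m x y z = {(x,z),(z,y)}"
  using fwd_cases[OF assms] by blast

lemma fwd_valid:
  assumes z: "z \<in> V - {x,y}" and uv: "(u,v) \<in> fwd m x y z"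
  shows "u \<in> V \<and> v \<in> V \<and> u \<noteq> v \<and> \<not> m u v"
  using z
proof (cases rule: fwd_casesE)
  case A
  then have "u = x" "v = y" using uv by auto
  then show ?thesis using A z xV yV xy mo[of x z y] by blast
next
  case (B a)
  have av: "a \<in> V" "a \<noteq> x" using mV[of x a] B by auto
  have "\<not> m z a" using B mo[of z y a] by blast
  moreover have "\<not> m a y" using B mi[where u=y and v=a and w=z] by blast
  moreover have "a \<noteq> z" using B by blast
  ultimately show ?thesis using uv B z av xV yV xy by auto
next
  case C
  then have "u = x" "v = y" using uv by auto
  then show ?thesis using C z xV yV xy mi[where u=y and v=z and w=x] by blast
next
  case D
  then show ?thesis using uv z xV yV xy by auto
qed

lemma fwd_shape:
  assumes z: "z \<in> V - {x,y}" and uv: "(u,v) \<in> fwd m x y z"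
  shows "u = x \<or> v = y \<or> (u \<in> V - {x,y} \<and> v \<in> V - {x,y} \<and> m u y \<and> m x v)"
  using z
proof (cases rule: fwd_casesE)
  case (B a)
  then show ?thesis using uv z mV[of x a] by auto
qed (use uv in auto)

lemma fwd_kind:
  assumes z: "z \<in> V - {x,y}" and uv: "(u,v) \<in> fwd m x y z"
  shows "(u = x \<and> v \<noteq> y \<longrightarrow> v = z) \<and>
         (u = x \<and> v = y \<longrightarrow> m x z \<or> (m z y \<and> (\<forall>a. m x a \<longrightarrow> a = y))) \<and>
         (u \<noteq> x \<and> v = y \<longrightarrow> (u = z \<and> \<not> m x z) \<or> (m z y \<and> m x u)) \<and>
         (u \<noteq> x \<and> v \<noteq> y \<longrightarrow> u = z)"
  using z
proof (cases rule: fwd_casesE)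
  case A
  then show ?thesis using uv by simp
next
  case (B a)
  have "a \<noteq> x" using mV[of x a] B by metis
  then show ?thesis using uv B z by auto
next
  case C
  then show ?thesis using uv by simp
next
  case D
  then show ?thesis using uv z by auto
qed

lemma fwd_disj:
  assumes z1: "z1 \<in> V - {x,y}" and z2: "z2 \<in> V - {x,y}" and ne: "z1 \<noteq> z2"
  shows "fwd m x y z1 \<inter> fwd m x y z2 = {}"
proof (rule ccontr)
  assume "fwd m x y z1 \<inter> fwd m x y z2 \<noteq> {}"
  then obtain u v where u1: "(u,v) \<in> fwd m x y z1" and u2: "(u,v) \<in> fwd m x y z2" by auto
  note k1 = fwd_kind[OF z1 u1] and k2 = fwd_kind[OF z2 u2]
  have mo1: "m x z1 \<Longrightarrow> m x z2 \<Longrightarrow> False" using mo[where u=x and v=z1 and w=z2] ne by blast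
  have mi1: "m z1 y \<Longrightarrow> m z2 y \<Longrightarrow> False" using mi[where u=y and v=z1 and w=z2] ne by blast
  show False
  proof (cases "u = x")
    case True
    show False
    proof (cases "v = y")
      case True
      then show False using k1 k2 \<open>u = x\<close> mo1 mi1 z1 z2 by blast
    next
      case False
      then show False using k1 k2 \<open>u = x\<close> ne by blast
    qed
  next
    case False
    show False
    proof (cases "v = y")
      case True
      then show False using k1 k2 \<open>u \<noteq> x\<close> mo1 mi1 ne by blast
    next
      case False
      then show False using k1 k2 \<open>u \<noteq> x\<close> ne by blast
    qed
  qed
qed

lemma step2: "(a,b) \<in> E \<Longrightarrow> (b,c) \<in> E \<Longrightarrow> (a,c) \<in> E\<^sup>*"
  by (meson r_into_rtrancl rtrancl_into_rtrancl)

lemma step3: "(a,b) \<in> E \<Longrightarrow> (b,c) \<in> E \<Longrightarrow> (c,d) \<in> E \<Longrightarrow> (a,d) \<in> E\<^sup>*"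
  by (meson r_into_rtrancl rtrancl_into_rtrancl)

lemma fwd_reach1:
  assumes z: "z \<in> V - {x,y}"
  shows "(x,y) \<in> (fwd m x y z)\<^sup>*"
  using z
proof (cases rule: fwd_casesE)
  case (B a)
  then show ?thesis using step3[of x z "fwd m x y z" a y] by simp
next
  case D
  then show ?thesis using step2[of x z "fwd m x y z" y] by simp
qed auto

lemma fwd_reach2:
  assumes z: "z \<in> V - {x,y}" and uv: "(u,v) \<in> fwd m x y z"
  shows "(x,u) \<in> (fwd m x y z)\<^sup>* \<and> (v,y) \<in> (fwd m x y z)\<^sup>*"
  using z
proof (cases rule: fwd_casesE)
  case (B a)
  have 1: "(x,z) \<in> (fwd m x y z)\<^sup>*" "(a,y) \<in> (fwd m x y z)\<^sup>*" using B by auto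
  have 2: "(x,a) \<in> (fwd m x y z)\<^sup>*" using step2[of x z "fwd m x y z" a] B by simp
  have 3: "(z,y) \<in> (fwd m x y z)\<^sup>*" using step2[of z a "fwd m x y z" y] B by simp
  show ?thesis using uv B 1 2 3 by auto
next
  case D
  then show ?thesis using uv by auto
qed (use uv in auto)

end

lemma misscond_flip: "misscond V m x y \<Longrightarrow> misscond V (\<lambda>u v. m v u) x y"
  unfolding misscond_def by blast



definition packs :: "'a set \<Rightarrow> ('a \<times> 'a) set \<Rightarrow> 'a set \<Rightarrow> nat \<Rightarrow> bool" where
  "packs V A S k \<longleftrightarrow> (\<exists>H :: nat \<Rightarrow> 'a set \<times> ('a \<times> 'a) set.
      (\<forall>i<k. strong_subgraph V A (H i) \<and> S \<subseteq> fst (H i)) \<and>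
      (\<forall>i<k. \<forall>j<k. i \<noteq> j \<longrightarrow> snd (H i) \<inter> snd (H j) = {}))"

lemma lambda_S_alt: "lambda_S V A S = Max {k. packs V A S k}"
  unfolding lambda_S_def packs_def by simp

lemma digraph_finite_A: "digraph V A \<Longrightarrow> finite A"
  unfolding digraph_def by (meson finite_SigmaI finite_subset)

lemma packs_bound:
  assumes dg: "digraph V A" and p: "packs V A S k" and u: "u \<in> S" and w: "w \<in> S" and uw: "u \<noteq> w"
  shows "k \<le> card {e\<in>A. fst e = u}" and "k \<le> card {e\<in>A. snd e = u}"
proof -
  obtain H where H1: "\<And>i. i<k \<Longrightarrow> strong_subgraph V A (H i) \<and> S \<subseteq> fst (H i)"
    and H2: "\<And>i j. i<k \<Longrightarrow> j<k \<Longrightarrow> i \<noteq> j \<Longrightarrow> snd (H i) \<inter> snd (H j) = {}"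
    using p unfolding packs_def by blast
  have sub: "snd (H i) \<subseteq> A" if "i < k" for i using H1[OF that] unfolding strong_subgraph_def by blast
  have reach: "(a,b) \<in> (snd (H i))\<^sup>*" if "i < k" "a \<in> S" "b \<in> S" for i a b
    using H1[OF that(1)] that unfolding strong_subgraph_def by blast
  have finA: "finite A" using digraph_finite_A[OF dg] .
  have ex_out: "\<exists>e. e \<in> snd (H i) \<and> fst e = u" if "i < k" for i
  proof -
    have "(u,w) \<in> (snd (H i))\<^sup>*" using reach[OF that u w] .
    then show ?thesis using uw by (cases rule: converse_rtranclE) auto
  qed
  have ex_in: "\<exists>e. e \<in> snd (H i) \<and> snd e = u" if "i < k" for i
  proof -
    have "(w,u) \<in> (snd (H i))\<^sup>*" using reach[OF that w u] .
    then show ?thesis using uw by (cases rule: rtranclE) auto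
  qed
  define eo where "eo i = (SOME e. e \<in> snd (H i) \<and> fst e = u)" for i
  define ei where "ei i = (SOME e. e \<in> snd (H i) \<and> snd e = u)" for i
  have eo: "eo i \<in> snd (H i) \<and> fst (eo i) = u" if "i < k" for i
    unfolding eo_def using someI_ex[OF ex_out[OF that]] .
  have ei: "ei i \<in> snd (H i) \<and> snd (ei i) = u" if "i < k" for i
    unfolding ei_def using someI_ex[OF ex_in[OF that]] .
  have "card {..<k} \<le> card {e\<in>A. fst e = u}"
  proof (rule card_inj_on_le)
    show "inj_on eo {..<k}" unfolding inj_on_def
    proof (intro ballI impI)
      fix i j assume "i \<in> {..<k}" "j \<in> {..<k}" "eo i = eo j"
      then show "i = j" using eo[of i] eo[of j] H2[of i j] by auto
    qed
    show "eo ` {..<k} \<subseteq> {e \<in> A. fst e = u}" using eo sub by blast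
    show "finite {e \<in> A. fst e = u}" using finA by simp
  qed
  then show "k \<le> card {e\<in>A. fst e = u}" by simp
  have "card {..<k} \<le> card {e\<in>A. snd e = u}"
  proof (rule card_inj_on_le)
    show "inj_on ei {..<k}" unfolding inj_on_def
    proof (intro ballI impI)
      fix i j assume "i \<in> {..<k}" "j \<in> {..<k}" "ei i = ei j"
      then show "i = j" using ei[of i] ei[of j] H2[of i j] by auto
    qed
    show "ei ` {..<k} \<subseteq> {e \<in> A. snd e = u}" using ei sub by blast
    show "finite {e \<in> A. snd e = u}" using finA by simp
  qed
  then show "k \<le> card {e\<in>A. snd e = u}" by simp
qed

lemma packs_0: "packs V A S 0"
  unfolding packs_def by simp

lemma lambdaS_props:
  assumes dg: "digraph V A" and u: "u \<in> S" and w: "w \<in> S" and uw: "u \<noteq> w"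
  shows "packs V A S k \<Longrightarrow> k \<le> lambda_S V A S"
    and "lambda_S V A S \<le> card {e\<in>A. fst e = u}"
    and "lambda_S V A S \<le> card {e\<in>A. snd e = u}"
proof -
  have fin: "finite {k. packs V A S k}"
    unfolding finite_nat_set_iff_bounded_le using packs_bound(1)[OF dg _ u w uw] by blast
  have ne: "{k. packs V A S k} \<noteq> {}" using packs_0 by blast
  show "packs V A S k \<Longrightarrow> k \<le> lambda_S V A S"
    unfolding lambda_S_alt using fin by simp
  have "lambda_S V A S \<in> {k. packs V A S k}" unfolding lambda_S_alt using Max_in[OF fin ne] .
  then show "lambda_S V A S \<le> card {e\<in>A. fst e = u}" "lambda_S V A S \<le> card {e\<in>A. snd e = u}"
    using packs_bound[OF dg _ u w uw] by auto
qed

lemma lk_set: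
  assumes "finite V" "card V \<ge> 2"
  shows "finite {S. S \<subseteq> V \<and> card S = 2}" "{S. S \<subseteq> V \<and> card S = 2} \<noteq> {}"
proof -
  show "finite {S. S \<subseteq> V \<and> card S = 2}" using assms(1) by simp
  obtain T where "T \<subseteq> V" "card T = 2" using obtain_subset_with_card_n[OF assms(2)] by metis
  then show "{S. S \<subseteq> V \<and> card S = 2} \<noteq> {}" by blast
qed

lemma lk_ge:
  assumes dg: "digraph V A" and n: "card V \<ge> 2"
    and P: "\<And>x y. x \<in> V \<Longrightarrow> y \<in> V \<Longrightarrow> x \<noteq> y \<Longrightarrow> packs V A {x,y} l"
  shows "l \<le> lambda_k V A 2"
proof -
  have finV: "finite V" using dg unfolding digraph_def by blast
  note ls = lk_set[OF finV n]
  have "l \<le> lambda_S V A S" if SV: "S \<subseteq> V" and c2: "card S = 2" for S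
  proof -
    obtain x y where S: "S = {x,y}" "x \<noteq> y" using c2 card_2_iff by metis
    then show ?thesis using lambdaS_props(1)[OF dg _ _ S(2) P] SV by auto
  qed
  then show ?thesis unfolding lambda_k_def using ls by simp
qed

lemma lk_le:
  assumes dg: "digraph V A" and n: "card V \<ge> 2" and u: "u \<in> V"
  shows "lambda_k V A 2 \<le> card {e\<in>A. fst e = u}" "lambda_k V A 2 \<le> card {e\<in>A. snd e = u}"
proof -
  have finV: "finite V" using dg unfolding digraph_def by blast
  note ls = lk_set[OF finV n]
  have "V - {u} \<noteq> {}"
  proof
    assume "V - {u} = {}"
    then have "V \<subseteq> {u}" by blast
    then have "card V \<le> card {u}" by (intro card_mono) simp_all
    then have "card V \<le> 1" by simp
    then show False using n by simp
  qed
  then obtain w where w: "w \<in> V" "w \<noteq> u" by blast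
  have S: "{u,w} \<in> {S. S \<subseteq> V \<and> card S = 2}" using u w by auto
  have "lambda_k V A 2 \<le> lambda_S V A {u,w}"
    unfolding lambda_k_def using ls S by (simp add: Min_le)
  then show "lambda_k V A 2 \<le> card {e\<in>A. fst e = u}" "lambda_k V A 2 \<le> card {e\<in>A. snd e = u}"
    using lambdaS_props(2,3)[OF dg _ _ w(2)[symmetric], of "{u,w}"] by (auto intro: order_trans)
qed



lemma hub_strong:
  assumes "\<And>v. v \<in> W \<Longrightarrow> (h,v) \<in> E\<^sup>* \<and> (v,h) \<in> E\<^sup>*"
  shows "\<forall>u\<in>W. \<forall>v\<in>W. (u,v) \<in> E\<^sup>*"
  using assms by (meson rtrancl_trans)

lemma KL:
  assumes dg: "digraph V A" and xV: "x \<in> V" and yV: "y \<in> V" and xy: "x \<noteq> y"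
    and mo: "\<And>u v w. (u,v) \<in> complete_arcs V - A \<Longrightarrow> (u,w) \<in> complete_arcs V - A \<Longrightarrow> v = w"
    and mi: "\<And>u v w. (v,u) \<in> complete_arcs V - A \<Longrightarrow> (w,u) \<in> complete_arcs V - A \<Longrightarrow> v = w"
  shows "packs V A {x,y} (card V - 2)"
proof -
  define m where "m u v \<longleftrightarrow> (u,v) \<in> complete_arcs V - A" for u v
  define m' where "m' u v \<longleftrightarrow> m v u" for u v
  have finV: "finite V" using dg unfolding digraph_def by blast
  have mc: "misscond V m x y"
  proof
    show "\<And>u v. m u v \<Longrightarrow> u \<in> V \<and> v \<in> V \<and> u \<noteq> v" unfolding m_def complete_arcs_def by blast
    show "\<And>u v w. m u v \<Longrightarrow> m u w \<Longrightarrow> v = w" unfolding m_def by (rule mo)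
    show "\<And>u v w. m v u \<Longrightarrow> m w u \<Longrightarrow> v = w" unfolding m_def by (rule mi)
  qed (use xV yV xy in auto)
  have mc': "misscond V m' x y"
    unfolding m'_def using misscond_flip[OF mc] .
  define Z where "Z = V - {x,y}"
  have cZ: "card Z = card V - 2" unfolding Z_def using xV yV xy finV by (simp add: card_Diff_subset)
  obtain g where g: "bij_betw g {0..<card Z} Z" using ex_bij_betw_nat_finite finV Z_def by blast
  define F where "F z = fwd m x y z" for z
  define B where "B z = fwd m' x y z" for z
  define E where "E z = F z \<union> (B z)\<inverse>" for z
  define W where "W z = {x,y} \<union> fst ` E z \<union> snd ` E z" for z
  define H where "H i = (W (g i), E (g i))" for i
  have Fv: "u \<in> V \<and> v \<in> V \<and> u \<noteq> v \<and> \<not> m u v" if "z \<in> Z" "(u,v) \<in> F z" for z u v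
    using misscond.fwd_valid[OF mc] that unfolding Z_def F_def by blast
  have Bv: "u \<in> V \<and> v \<in> V \<and> u \<noteq> v \<and> \<not> m v u" if "z \<in> Z" "(u,v) \<in> B z" for z u v
    using misscond.fwd_valid[OF mc'] that unfolding Z_def B_def m'_def by blast
  have Fs: "u = x \<or> v = y \<or> (u \<in> Z \<and> v \<in> Z \<and> m u y \<and> m x v)" if "z \<in> Z" "(u,v) \<in> F z" for z u v
    using misscond.fwd_shape[OF mc] that unfolding Z_def F_def by blast
  have Bs: "u = x \<or> v = y \<or> (u \<in> Z \<and> v \<in> Z \<and> m y u \<and> m v x)" if "z \<in> Z" "(u,v) \<in> B z" for z u v
    using misscond.fwd_shape[OF mc'] that unfolding Z_def B_def m'_def by blast
  have EA: "E z \<subseteq> A" if "z \<in> Z" for z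
  proof
    fix e assume e: "e \<in> E z"
    obtain u v where e': "e = (u,v)" by fastforce
    have "u \<in> V \<and> v \<in> V \<and> u \<noteq> v \<and> \<not> m u v"
      using e e' Fv[OF that] Bv[OF that] unfolding E_def by auto
    then show "e \<in> A" unfolding e' m_def complete_arcs_def by auto
  qed
  have WV: "W z \<subseteq> V" if "z \<in> Z" for z
  proof -
    have "E z \<subseteq> V \<times> V" using EA[OF that] dg unfolding digraph_def by blast
    then show ?thesis unfolding W_def using xV yV by auto
  qed
  have EW: "E z \<subseteq> W z \<times> W z" for z unfolding W_def by (auto intro: rev_image_eqI)
  have reachE: "(x,v) \<in> (E z)\<^sup>* \<and> (v,x) \<in> (E z)\<^sup>*" if z: "z \<in> Z" and v: "v \<in> W z" for z v
  proof -
    have zz: "z \<in> V - {x,y}" using z Z_def by simp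
    have FE: "(F z)\<^sup>* \<subseteq> (E z)\<^sup>*" unfolding E_def by (rule rtrancl_mono) blast
    have BE: "((B z)\<inverse>)\<^sup>* \<subseteq> (E z)\<^sup>*" unfolding E_def by (rule rtrancl_mono) blast
    have xy1: "(x,y) \<in> (E z)\<^sup>*" using misscond.fwd_reach1[OF mc zz] FE unfolding F_def by blast
    have "(x,y) \<in> (B z)\<^sup>*" using misscond.fwd_reach1[OF mc' zz] unfolding B_def .
    then have "(y,x) \<in> ((B z)\<inverse>)\<^sup>*" by (simp add: rtrancl_converse)
    then have yx1: "(y,x) \<in> (E z)\<^sup>*" using BE by blast
    have Fr: "(x,a) \<in> (E z)\<^sup>* \<and> (b,y) \<in> (E z)\<^sup>*" if "(a,b) \<in> F z" for a b
      using misscond.fwd_reach2[OF mc zz that[unfolded F_def]] FE unfolding F_def by blast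
    have Br: "(x,a) \<in> (B z)\<^sup>* \<and> (b,y) \<in> (B z)\<^sup>*" if "(a,b) \<in> B z" for a b
      using misscond.fwd_reach2[OF mc' zz that[unfolded B_def]] unfolding B_def by blast
    have Br': "(a,x) \<in> (E z)\<^sup>* \<and> (y,b) \<in> (E z)\<^sup>*" if "(a,b) \<in> B z" for a b
    proof -
      have "(a,x) \<in> ((B z)\<inverse>)\<^sup>*" "(y,b) \<in> ((B z)\<inverse>)\<^sup>*" using Br[OF that] by (simp_all add: rtrancl_converse)
      then show ?thesis using BE by blast
    qed
    have inE: "(a,b) \<in> (E z)\<^sup>*" if "(a,b) \<in> E z" for a b using that by blast
    from v consider "v = x" | "v = y" | a where "(v,a) \<in> E z" | a where "(a,v) \<in> E z"
    proof -
      assume h1: "v = x \<Longrightarrow> thesis" and h2: "v = y \<Longrightarrow> thesis"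
        and h3: "\<And>a. (v,a) \<in> E z \<Longrightarrow> thesis" and h4: "\<And>a. (a,v) \<in> E z \<Longrightarrow> thesis"
      from v have "v = x \<or> v = y \<or> v \<in> fst ` E z \<or> v \<in> snd ` E z" unfolding W_def by blast
      then show thesis
      proof (elim disjE)
        assume "v \<in> fst ` E z" then obtain e where "e \<in> E z" "v = fst e" by blast
        then show thesis using h3[of "snd e"] by simp
      next
        assume "v \<in> snd ` E z" then obtain e where "e \<in> E z" "v = snd e" by blast
        then show thesis using h4[of "fst e"] by simp
      qed (use h1 h2 in auto)
    qed
    then show ?thesis
    proof cases
      case 1 then show ?thesis by simp
    next
      case 2 then show ?thesis using xy1 yx1 by simp
    next
      case (3 a)
      then have "(v,a) \<in> F z \<or> (a,v) \<in> B z" unfolding E_def by blast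
      then show ?thesis
      proof
        assume h: "(v,a) \<in> F z"
        have "(v,a) \<in> (E z)\<^sup>*" using h unfolding E_def by blast
        then show ?thesis using Fr[OF h] yx1 by (meson rtrancl_trans)
      next
        assume h: "(a,v) \<in> B z"
        have "(v,a) \<in> (E z)\<^sup>*" using h unfolding E_def by blast
        then show ?thesis using Br'[OF h] xy1 by (meson rtrancl_trans)
      qed
    next
      case (4 a)
      then have "(a,v) \<in> F z \<or> (v,a) \<in> B z" unfolding E_def by blast
      then show ?thesis
      proof
        assume h: "(a,v) \<in> F z"
        have "(a,v) \<in> (E z)\<^sup>*" using h unfolding E_def by blast
        then show ?thesis using Fr[OF h] yx1 by (meson rtrancl_trans)
      next
        assume h: "(v,a) \<in> B z"
        have "(a,v) \<in> (E z)\<^sup>*" using h unfolding E_def by blast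
        then show ?thesis using Br'[OF h] xy1 by (meson rtrancl_trans)
      qed
    qed
  qed
  have FB: "F z \<inter> (B z')\<inverse> = {}" if z: "z \<in> Z" and z': "z' \<in> Z" for z z'
  proof (rule ccontr)
    assume "F z \<inter> (B z')\<inverse> \<noteq> {}"
    then obtain u v where uv: "(u,v) \<in> F z" "(v,u) \<in> B z'" by auto
    note f1 = Fv[OF z uv(1)] and f2 = Fs[OF z uv(1)] and b2 = Bs[OF z' uv(2)]
    have "\<not> (m u y \<and> m u x)" using mo[of u y x] xy unfolding m_def by blast
    have xZ: "x \<notin> Z" "y \<notin> Z" unfolding Z_def by auto
    have "\<not> (m u y \<and> m u x)" using mo[of u y x] xy unfolding m_def by blast
    then show False using f1 f2 b2 xy xZ by metis
  qed
  have Edisj: "E z \<inter> E z' = {}" if z: "z \<in> Z" and z': "z' \<in> Z" and ne: "z \<noteq> z'" for z z'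
  proof -
    have "F z \<inter> F z' = {}" using misscond.fwd_disj[OF mc] z z' ne unfolding F_def Z_def by blast
    moreover have "B z \<inter> B z' = {}" using misscond.fwd_disj[OF mc'] z z' ne unfolding B_def Z_def by blast
    then have "(B z)\<inverse> \<inter> (B z')\<inverse> = {}" by blast
    ultimately show ?thesis unfolding E_def using FB[OF z z'] FB[OF z' z] by blast
  qed
  have gZ: "g i \<in> Z" if "i < card Z" for i using g that unfolding bij_betw_def by auto
  show ?thesis
    unfolding packs_def
  proof (intro exI conjI allI impI)
    fix i assume i: "i < card V - 2"
    then have gi: "g i \<in> Z" using gZ cZ by simp
    have st: "\<forall>u\<in>W (g i). \<forall>v\<in>W (g i). (u,v) \<in> (E (g i))\<^sup>*"
      by (rule hub_strong[of "W (g i)" x "E (g i)"]) (rule reachE[OF gi])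
    show "strong_subgraph V A (H i)"
      unfolding strong_subgraph_def H_def fst_conv snd_conv
      using WV[OF gi] EA[OF gi] EW[of "g i"] st by (intro conjI)
    show "{x,y} \<subseteq> fst (H i)" unfolding H_def W_def by simp
  next
    fix i j assume i: "i < card V - 2" and j: "j < card V - 2" and ij: "i \<noteq> j"
    have gi: "g i \<in> Z" and gj: "g j \<in> Z" using gZ cZ i j by auto
    have "g i \<noteq> g j" using g i j ij cZ unfolding bij_betw_def inj_on_def by auto
    then show "snd (H i) \<inter> snd (H j) = {}" unfolding H_def using Edisj[OF gi gj] by simp
  qed
qed



definition olist :: "('a \<Rightarrow> 'a) \<Rightarrow> 'a \<Rightarrow> 'a list" where
  "olist f s = map (\<lambda>i. (f ^^ i) s) [0..<funpow_dist1 f s s]"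

lemma olist_set: "s \<in> orbit f s \<Longrightarrow> set (olist f s) = orbit f s"
  unfolding olist_def set_map set_upt using orbit_conv_funpow_dist1[of s f] by simp

lemma olist_distinct: "s \<in> orbit f s \<Longrightarrow> distinct (olist f s)"
  unfolding olist_def distinct_map set_upt using inj_on_funpow_dist1[of s f s]
  by (simp only: distinct_upt simp_thms)

lemma olist_len2: "s \<in> orbit f s \<Longrightarrow> f s \<noteq> s \<Longrightarrow> length (olist f s) \<ge> 2"
proof -
  assume o: "s \<in> orbit f s" and ne: "f s \<noteq> s"
  have p: "(f ^^ funpow_dist1 f s s) s = s" using funpow_dist1_prop[OF o] .
  have "funpow_dist1 f s s \<noteq> 1"
  proof
    assume "funpow_dist1 f s s = 1"
    then have "(f ^^ 1) s = s" using p by simp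
    then show False using ne by simp
  qed
  then show ?thesis unfolding olist_def by simp
qed

lemma olist_arcs:
  assumes o: "s \<in> orbit f s"
  shows "cycle_arcs (olist f s) = (\<lambda>u. (u, f u)) ` orbit f s"
proof -
  define K where "K = funpow_dist1 f s s"
  have p: "(f ^^ K) s = s" unfolding K_def using funpow_dist1_prop[OF o] .
  have K0: "K > 0" unfolding K_def by simp
  have len: "length (olist f s) = K" unfolding olist_def K_def by simp
  have nth: "olist f s ! i = (f ^^ i) s" if "i < K" for i
    unfolding olist_def K_def using that K_def by (simp del: upt_Suc)
  have step: "olist f s ! ((i+1) mod K) = f ((f ^^ i) s)" if i: "i < K" for i
  proof (cases "i + 1 < K")
    case True
    then show ?thesis using nth[OF True] by simp
  next
    case False
    then have "i + 1 = K" using i by simp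
    moreover have "f ((f ^^ i) s) = (f ^^ Suc i) s" by simp
    moreover have "Suc i = K" using \<open>i + 1 = K\<close> by simp
    ultimately have r: "(i+1) mod K = 0" "f ((f ^^ i) s) = s" using p by simp_all
    then show ?thesis using nth[OF K0] by simp
  qed
  have orb: "orbit f s = (\<lambda>i. (f ^^ i) s) ` {0..<K}" unfolding K_def using orbit_conv_funpow_dist1[OF o] .
  have "cycle_arcs (olist f s) = {((f ^^ i) s, f ((f ^^ i) s)) | i. i < K}"
  proof -
    have eq: "(olist f s ! i, olist f s ! ((i+1) mod K)) = ((f^^i) s, f ((f^^i) s))" if "i < K" for i
      using nth[OF that] step[OF that] by simp
    show ?thesis unfolding cycle_arcs_def len
    proof (intro set_eqI iffI)
      fix e assume "e \<in> {(olist f s ! i, olist f s ! ((i + 1) mod K)) |i. i < K}"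
      then obtain i where "e = (olist f s ! i, olist f s ! ((i + 1) mod K))" "i < K" by blast
      then show "e \<in> {((f ^^ i) s, f ((f ^^ i) s)) |i. i < K}" using eq[of i] by auto
    next
      fix e assume "e \<in> {((f ^^ i) s, f ((f ^^ i) s)) |i. i < K}"
      then obtain i where "e = ((f ^^ i) s, f ((f ^^ i) s))" "i < K" by blast
      then have "e = (olist f s ! i, olist f s ! ((i + 1) mod K))" using eq[of i] by simp
      then show "e \<in> {(olist f s ! i, olist f s ! ((i + 1) mod K)) |i. i < K}" using \<open>i < K\<close> by blast
    qed
  qed
  also have "\<dots> = (\<lambda>u. (u, f u)) ` orbit f s" unfolding orb by auto
  finally show ?thesis .
qed

lemma cycles_from_perm:
  assumes fin: "finite U" and perm: "f permutes U" and nf: "\<And>u. u \<in> U \<Longrightarrow> f u \<noteq> u" and UV: "U \<subseteq> V"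
  shows "\<exists>C. finite C \<and> (\<forall>c\<in>C. is_cycle V c) \<and> (\<forall>c\<in>C. \<forall>c'\<in>C. c \<noteq> c' \<longrightarrow> set c \<inter> set c' = {}) \<and>
            (\<Union>c\<in>C. cycle_arcs c) = (\<lambda>u. (u, f u)) ` U \<and> (\<Union>c\<in>C. set c) = U"
proof -
  obtain Cs where cyc: "\<forall>c\<in>Cs. cyclic_on f c" and un: "\<Union>Cs = U"
    and dj: "\<forall>c1\<in>Cs. \<forall>c2\<in>Cs. c1 \<noteq> c2 \<longrightarrow> c1 \<inter> c2 = {}"
    using permutes_decompose[OF perm fin] by blast
  define r where "r c = (SOME s. s \<in> c)" for c :: "'a set"
  have rc: "r c \<in> c \<and> c = orbit f (r c)" if c: "c \<in> Cs" for c
  proof -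
    have "c \<noteq> {}" "\<forall>s\<in>c. c = orbit f s" using cyc c cyclic_on_alldef by blast+
    then have "r c \<in> c" unfolding r_def by (simp add: some_in_eq)
    then show ?thesis using \<open>\<forall>s\<in>c. c = orbit f s\<close> by blast
  qed
  have ro: "r c \<in> orbit f (r c)" if c: "c \<in> Cs" for c using rc[OF c] by simp
  have setc: "set (olist f (r c)) = c" if c: "c \<in> Cs" for c
    using olist_set[OF ro[OF c]] rc[OF c] by simp
  have arcsc: "cycle_arcs (olist f (r c)) = (\<lambda>u. (u, f u)) ` c" if c: "c \<in> Cs" for c
    using olist_arcs[OF ro[OF c]] rc[OF c] by simp
  have cU: "c \<subseteq> U" if "c \<in> Cs" for c using un that by blast
  define C where "C = (\<lambda>c. olist f (r c)) ` Cs"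
  have finCs: "finite Cs" using fin un finite_UnionD by blast
  show ?thesis
  proof (intro exI conjI)
    show "finite C" unfolding C_def using finCs by simp
    show "\<forall>c\<in>C. is_cycle V c"
    proof
      fix l assume "l \<in> C"
      then obtain c where c: "c \<in> Cs" and l: "l = olist f (r c)" unfolding C_def by blast
      have "r c \<in> U" using rc[OF c] cU[OF c] by blast
      then have "f (r c) \<noteq> r c" using nf by blast
      then show "is_cycle V l" unfolding is_cycle_def l
        using olist_distinct[OF ro[OF c]] olist_len2[OF ro[OF c]] setc[OF c] cU[OF c] UV by blast
    qed
    show "\<forall>c\<in>C. \<forall>c'\<in>C. c \<noteq> c' \<longrightarrow> set c \<inter> set c' = {}"
    proof (intro ballI impI)
      fix l l' assume "l \<in> C" "l' \<in> C" "l \<noteq> l'"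
      then obtain c c' where c: "c \<in> Cs" "l = olist f (r c)" and c': "c' \<in> Cs" "l' = olist f (r c')"
        unfolding C_def by blast
      then have "c \<noteq> c'" using \<open>l \<noteq> l'\<close> by blast
      then show "set l \<inter> set l' = {}" using dj c c' setc by metis
    qed
    show "(\<Union>c\<in>C. cycle_arcs c) = (\<lambda>u. (u, f u)) ` U"
    proof -
      have "(\<Union>c\<in>C. cycle_arcs c) = (\<Union>c\<in>Cs. cycle_arcs (olist f (r c)))" unfolding C_def by simp
      also have "\<dots> = (\<Union>c\<in>Cs. (\<lambda>u. (u, f u)) ` c)" using arcsc by simp
      also have "\<dots> = (\<lambda>u. (u, f u)) ` U" unfolding un[symmetric] by blast
      finally show ?thesis .
    qed
    show "(\<Union>c\<in>C. set c) = U"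
    proof -
      have "(\<Union>c\<in>C. set c) = (\<Union>c\<in>Cs. set (olist f (r c)))" unfolding C_def by simp
      also have "\<dots> = \<Union>Cs" using setc by simp
      finally show ?thesis using un by simp
    qed
  qed
qed



lemma ca_mem: "(u,v) \<in> cycle_arcs c \<Longrightarrow> u \<in> set c \<and> v \<in> set c"
proof -
  assume "(u,v) \<in> cycle_arcs c"
  then obtain i where i: "i < length c" "u = c ! i" "v = c ! ((i+1) mod length c)" unfolding cycle_arcs_def by blast
  have "length c > 0" using i(1) by linarith
  then have "(i+1) mod length c < length c" by (intro mod_less_divisor)
  then show ?thesis using i by simp
qed

lemma ca_out_unique:
  assumes d: "distinct c" and a: "(u,v) \<in> cycle_arcs c" and b: "(u,w) \<in> cycle_arcs c"
  shows "v = w"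
proof -
  obtain i where i: "i < length c" "u = c ! i" "v = c ! ((i+1) mod length c)" using a unfolding cycle_arcs_def by blast
  obtain j where j: "j < length c" "u = c ! j" "w = c ! ((j+1) mod length c)" using b unfolding cycle_arcs_def by blast
  have "i = j" using d i j nth_eq_iff_index_eq by metis
  then show ?thesis using i j by simp
qed

lemma mod_suc_inj:
  fixes i j L :: nat
  assumes "i < L" "j < L" "(i+1) mod L = (j+1) mod L"
  shows "i = j"
proof -
  have ri: "(i+1) mod L = (if i + 1 = L then 0 else i + 1)" using assms(1) by auto
  have rj: "(j+1) mod L = (if j + 1 = L then 0 else j + 1)" using assms(2) by auto
  show ?thesis using assms ri rj by (auto split: if_splits)
qed

lemma ca_in_unique:
  assumes d: "distinct c" and a: "(v,u) \<in> cycle_arcs c" and b: "(w,u) \<in> cycle_arcs c"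
  shows "v = w"
proof -
  obtain i where i: "i < length c" "v = c ! i" "u = c ! ((i+1) mod length c)" using a unfolding cycle_arcs_def by blast
  obtain j where j: "j < length c" "w = c ! j" "u = c ! ((j+1) mod length c)" using b unfolding cycle_arcs_def by blast
  have "length c > 0" using i(1) by linarith
  then have l: "(i+1) mod length c < length c" "(j+1) mod length c < length c"
    using mod_less_divisor by blast+
  have "(i+1) mod length c = (j+1) mod length c" using d i j l nth_eq_iff_index_eq by metis
  then have "i = j" using mod_suc_inj i(1) j(1) by blast
  then show ?thesis using i j by simp
qed

lemma ca_ex:
  assumes u: "u \<in> set c"
  shows "(\<exists>v. (u,v) \<in> cycle_arcs c) \<and> (\<exists>v. (v,u) \<in> cycle_arcs c)"
proof -
  obtain j where j: "j < length c" "u = c ! j" using u by (metis in_set_conv_nth)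
  have L: "length c > 0" using j by linarith
  have o: "(u, c ! ((j+1) mod length c)) \<in> cycle_arcs c" unfolding cycle_arcs_def using j by blast
  define i where "i = (if j = 0 then length c - 1 else j - 1)"
  have i: "i < length c" "(i+1) mod length c = j" unfolding i_def using j L by auto
  have "(c ! i, u) \<in> cycle_arcs c" unfolding cycle_arcs_def using i j by (metis (mono_tags, lifting) mem_Collect_eq)
  then show ?thesis using o by blast
qed

lemma card_out_le:
  assumes fin: "finite V" and sub: "A' \<subseteq> complete_arcs V" and uvw: "u \<in> V" "v \<in> V" "w \<in> V" "u \<noteq> v" "u \<noteq> w" "v \<noteq> w"
    and nv: "(u,v) \<notin> A'" and nw: "(u,w) \<notin> A'"
  shows "card {e\<in>A'. fst e = u} \<le> card V - 3"
proof -
  have "{e\<in>A'. fst e = u} \<subseteq> Pair u ` (V - {u,v,w})"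
  proof
    fix e assume e: "e \<in> {e\<in>A'. fst e = u}"
    then obtain b where eb: "e = (u,b)" by (cases e) auto
    have "b \<in> V" "b \<noteq> u" using e eb sub unfolding complete_arcs_def by auto
    moreover have "b \<noteq> v" "b \<noteq> w" using e eb nv nw by auto
    ultimately show "e \<in> Pair u ` (V - {u,v,w})" using eb by blast
  qed
  then have "card {e\<in>A'. fst e = u} \<le> card (Pair u ` (V - {u,v,w}))" using fin by (intro card_mono) auto
  also have "\<dots> \<le> card (V - {u,v,w})" by (rule card_image_le) (use fin in auto)
  also have "\<dots> = card V - 3" using uvw fin by (simp add: card_Diff_subset)
  finally show ?thesis .
qed

lemma card_in_le:
  assumes fin: "finite V" and sub: "A' \<subseteq> complete_arcs V" and uvw: "u \<in> V" "v \<in> V" "w \<in> V" "u \<noteq> v" "u \<noteq> w" "v \<noteq> w"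
    and nv: "(v,u) \<notin> A'" and nw: "(w,u) \<notin> A'"
  shows "card {e\<in>A'. snd e = u} \<le> card V - 3"
proof -
  have "{e\<in>A'. snd e = u} \<subseteq> (\<lambda>b. (b,u)) ` (V - {u,v,w})"
  proof
    fix e assume e: "e \<in> {e\<in>A'. snd e = u}"
    then obtain b where eb: "e = (b,u)" by (cases e) auto
    have "b \<in> V" "b \<noteq> u" using e eb sub unfolding complete_arcs_def by auto
    moreover have "b \<noteq> v" "b \<noteq> w" using e eb nv nw by auto
    ultimately show "e \<in> (\<lambda>b. (b,u)) ` (V - {u,v,w})" using eb by blast
  qed
  then have "card {e\<in>A'. snd e = u} \<le> card ((\<lambda>b. (b,u)) ` (V - {u,v,w}))" using fin by (intro card_mono) auto
  also have "\<dots> \<le> card (V - {u,v,w})" by (rule card_image_le) (use fin in auto)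
  also have "\<dots> = card V - 3" using uvw fin by (simp add: card_Diff_subset)
  finally show ?thesis .
qed

lemma digraph_sub: "digraph V A \<Longrightarrow> A \<subseteq> complete_arcs V"
  unfolding digraph_def complete_arcs_def by auto

lemma digraph_minus: "digraph V A \<Longrightarrow> digraph V (A - X)"
  unfolding digraph_def by auto

lemma three_le: "finite V \<Longrightarrow> u \<in> V \<Longrightarrow> v \<in> V \<Longrightarrow> w \<in> V \<Longrightarrow> u \<noteq> v \<Longrightarrow> u \<noteq> w \<Longrightarrow> v \<noteq> w \<Longrightarrow> card V \<ge> 3"
proof -
  assume a: "finite V" "u \<in> V" "v \<in> V" "w \<in> V" "u \<noteq> v" "u \<noteq> w" "v \<noteq> w"
  then have "card {u,v,w} \<le> card V" by (intro card_mono) auto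
  then show ?thesis using a by simp
qed

lemma rl_dir:
  assumes dg: "digraph V A" and n2: "card V \<ge> 2"
    and M1: "M \<subseteq> complete_arcs V" and AM: "A = complete_arcs V - M" and dc: "disjoint_cycles_cover V M"
  shows "min_strong_arc_conn V A 2 (card V - 2)"
proof -
  have finV: "finite V" using dg unfolding digraph_def by blast
  obtain C where Ccyc: "\<forall>c\<in>C. is_cycle V c"
    and Cdis: "\<forall>c\<in>C. \<forall>c'\<in>C. c \<noteq> c' \<longrightarrow> set c \<inter> set c' = {}"
    and MC: "M = (\<Union>c\<in>C. cycle_arcs c)" and Ccard: "card (V - (\<Union>c\<in>C. set c)) \<le> 1"
    using dc unfolding disjoint_cycles_cover_def by blast
  have Mo: "v = w" if a: "(u,v) \<in> M" "(u,w) \<in> M" for u v w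
  proof -
    obtain c1 c2 where c1: "c1 \<in> C" "(u,v) \<in> cycle_arcs c1" and c2: "c2 \<in> C" "(u,w) \<in> cycle_arcs c2"
      using a MC by blast
    have "u \<in> set c1" "u \<in> set c2" using ca_mem[OF c1(2)] ca_mem[OF c2(2)] by simp_all
    then have "c1 = c2" using Cdis c1 c2 by blast
    moreover have "distinct c1" using Ccyc c1 unfolding is_cycle_def by blast
    ultimately show ?thesis using ca_out_unique c1 c2 by metis
  qed
  have Mi: "v = w" if a: "(v,u) \<in> M" "(w,u) \<in> M" for u v w
  proof -
    obtain c1 c2 where c1: "c1 \<in> C" "(v,u) \<in> cycle_arcs c1" and c2: "c2 \<in> C" "(w,u) \<in> cycle_arcs c2"
      using a MC by blast
    have "u \<in> set c1" "u \<in> set c2" using ca_mem[OF c1(2)] ca_mem[OF c2(2)] by simp_all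
    then have "c1 = c2" using Cdis c1 c2 by blast
    moreover have "distinct c1" using Ccyc c1 unfolding is_cycle_def by blast
    ultimately show ?thesis using ca_in_unique c1 c2 by metis
  qed
  have Mex: "(\<exists>v. (u,v) \<in> M) \<and> (\<exists>v. (v,u) \<in> M)" if uC: "u \<in> (\<Union>c\<in>C. set c)" for u
  proof -
    obtain c where c: "c \<in> C" "u \<in> set c" using uC by blast
    then show ?thesis using ca_ex[OF c(2)] MC by blast
  qed
  have CM: "complete_arcs V - A = M" using M1 AM by blast
  have lam: "card V - 2 \<le> lambda_k V A 2"
  proof (rule lk_ge[OF dg n2])
    fix x y assume "x \<in> V" "y \<in> V" "x \<noteq> y"
    then show "packs V A {x, y} (card V - 2)"
      by (rule KL[OF dg]) (use Mo Mi CM in blast)+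
  qed
  have drop: "lambda_k V (A - {e}) 2 < card V - 2" if eA: "e \<in> A" for e
  proof -
    obtain p q where e: "e = (p,q)" by fastforce
    have pq: "p \<in> V" "q \<in> V" "p \<noteq> q" "(p,q) \<notin> M" using eA e AM unfolding complete_arcs_def by auto
    have dg': "digraph V (A - {e})" using digraph_minus[OF dg] .
    have sub': "A - {e} \<subseteq> complete_arcs V" using digraph_sub[OF dg'] .
    show ?thesis
    proof (cases "p \<in> (\<Union>c\<in>C. set c)")
      case True
      then obtain p' where pp': "(p,p') \<in> M" using Mex by blast
      have p': "p' \<in> V" "p' \<noteq> p" "p' \<noteq> q" using pp' M1 pq(4) unfolding complete_arcs_def by auto
      have "(p,p') \<notin> A - {e}" "(p,q) \<notin> A - {e}" using pp' AM e by auto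
      then have "card {e'\<in>A - {e}. fst e' = p} \<le> card V - 3"
        using card_out_le[OF finV sub' pq(1) p'(1) pq(2)] p' pq by auto
      moreover have "lambda_k V (A - {e}) 2 \<le> card {e'\<in>A - {e}. fst e' = p}" using lk_le(1)[OF dg' n2 pq(1)] .
      moreover have "card V \<ge> 3" using three_le[OF finV pq(1) p'(1) pq(2)] p' pq by auto
      ultimately show ?thesis by linarith
    next
      case False
      have "q \<in> (\<Union>c\<in>C. set c)"
      proof (rule ccontr)
        assume "q \<notin> (\<Union>c\<in>C. set c)"
        then have "{p,q} \<subseteq> V - (\<Union>c\<in>C. set c)" using False pq by auto
        then have "card {p,q} \<le> card (V - (\<Union>c\<in>C. set c))" using finV by (intro card_mono) auto
        then show False using Ccard pq(3) by simp
      qed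
      then obtain q' where qq': "(q',q) \<in> M" using Mex by blast
      have q': "q' \<in> V" "q' \<noteq> q" "q' \<noteq> p" using qq' M1 pq(4) unfolding complete_arcs_def by auto
      have "(q',q) \<notin> A - {e}" "(p,q) \<notin> A - {e}" using qq' AM e by auto
      then have "card {e'\<in>A - {e}. snd e' = q} \<le> card V - 3"
        using card_in_le[OF finV sub' pq(2) q'(1) pq(1)] q' pq by auto
      moreover have "lambda_k V (A - {e}) 2 \<le> card {e'\<in>A - {e}. snd e' = q}" using lk_le(2)[OF dg' n2 pq(2)] .
      moreover have "card V \<ge> 3" using three_le[OF finV pq(1) q'(1) pq(2)] q' pq by auto
      ultimately show ?thesis by linarith
    qed
  qed
  show ?thesis unfolding min_strong_arc_conn_def using lam drop by blast
qed

lemma lr_dir: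
  assumes dg: "digraph V A" and n2: "card V \<ge> 2"
    and L: "min_strong_arc_conn V A 2 (card V - 2)"
  shows "\<exists>M. M \<subseteq> complete_arcs V \<and> A = complete_arcs V - M \<and> disjoint_cycles_cover V M"
proof -
  have finV: "finite V" using dg unfolding digraph_def by blast
  have lam: "card V - 2 \<le> lambda_k V A 2" and minl: "\<And>e. e \<in> A \<Longrightarrow> lambda_k V (A - {e}) 2 < card V - 2"
    using L unfolding min_strong_arc_conn_def by auto
  define M where "M = complete_arcs V - A"
  have Asub: "A \<subseteq> complete_arcs V" using digraph_sub[OF dg] .
  have AM: "A = complete_arcs V - M" unfolding M_def using Asub by blast
  have M1: "M \<subseteq> complete_arcs V" unfolding M_def by blast
  have Mc: "u \<in> V \<and> v \<in> V \<and> u \<noteq> v" if "(u,v) \<in> M" for u v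
    using that M1 unfolding complete_arcs_def by blast
  have Mo: "v = w" if a: "(u,v) \<in> M" "(u,w) \<in> M" for u v w
  proof (rule ccontr)
    assume vw: "v \<noteq> w"
    have uvw: "u \<in> V" "v \<in> V" "w \<in> V" "u \<noteq> v" "u \<noteq> w" using Mc[OF a(1)] Mc[OF a(2)] by auto
    have "(u,v) \<notin> A" "(u,w) \<notin> A" using a unfolding M_def by auto
    then have "card {e\<in>A. fst e = u} \<le> card V - 3" using card_out_le[OF finV Asub uvw vw] by blast
    moreover have "lambda_k V A 2 \<le> card {e\<in>A. fst e = u}" using lk_le(1)[OF dg n2 uvw(1)] .
    moreover have "card V \<ge> 3" using three_le[OF finV uvw vw] .
    ultimately show False using lam by linarith
  qed
  have Mi: "v = w" if a: "(v,u) \<in> M" "(w,u) \<in> M" for u v w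
  proof (rule ccontr)
    assume vw: "v \<noteq> w"
    have uvw: "u \<in> V" "v \<in> V" "w \<in> V" "u \<noteq> v" "u \<noteq> w" using Mc[OF a(1)] Mc[OF a(2)] by auto
    have "(v,u) \<notin> A" "(w,u) \<notin> A" using a unfolding M_def by auto
    then have "card {e\<in>A. snd e = u} \<le> card V - 3" using card_in_le[OF finV Asub uvw vw] by blast
    moreover have "lambda_k V A 2 \<le> card {e\<in>A. snd e = u}" using lk_le(2)[OF dg n2 uvw(1)] .
    moreover have "card V \<ge> 3" using three_le[OF finV uvw vw] .
    ultimately show False using lam by linarith
  qed
  have Max: "p \<in> fst ` M \<or> q \<in> snd ` M" if pqA: "(p,q) \<in> A" for p q
  proof (rule ccontr)
    assume "\<not> (p \<in> fst ` M \<or> q \<in> snd ` M)"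
    then have np: "\<And>v. (p,v) \<notin> M" and nq: "\<And>u. (u,q) \<notin> M" by force+
    define A' where "A' = A - {(p,q)}"
    have dg': "digraph V A'" unfolding A'_def using digraph_minus[OF dg] .
    have CM': "complete_arcs V - A' = insert (p,q) M" unfolding A'_def M_def using pqA Asub by blast
    have mo': "v = w" if h: "(u,v) \<in> complete_arcs V - A'" "(u,w) \<in> complete_arcs V - A'" for u v w
    proof -
      have h1: "(u,v) = (p,q) \<or> (u,v) \<in> M" and h2: "(u,w) = (p,q) \<or> (u,w) \<in> M" using h unfolding CM' by auto
      show ?thesis
      proof (cases "(u,v) = (p,q)")
        case True
        then show ?thesis using h2 np[of w] by auto
      next
        case False
        then have "(u,v) \<in> M" using h1 by blast
        then show ?thesis using h2 np[of v] Mo[of u v w] by auto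
      qed
    qed
    have mi': "v = w" if h: "(v,u) \<in> complete_arcs V - A'" "(w,u) \<in> complete_arcs V - A'" for u v w
    proof -
      have h1: "(v,u) = (p,q) \<or> (v,u) \<in> M" and h2: "(w,u) = (p,q) \<or> (w,u) \<in> M" using h unfolding CM' by auto
      show ?thesis
      proof (cases "(v,u) = (p,q)")
        case True
        then show ?thesis using h2 nq[of w] by auto
      next
        case False
        then have "(v,u) \<in> M" using h1 by blast
        then show ?thesis using h2 nq[of v] Mi[of v u w] by auto
      qed
    qed
    have "card V - 2 \<le> lambda_k V A' 2"
    proof (rule lk_ge[OF dg' n2])
      fix x y assume "x \<in> V" "y \<in> V" "x \<noteq> y"
      then show "packs V A' {x, y} (card V - 2)"
        by (rule KL[OF dg']) (use mo' mi' in blast)+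
    qed
    then show False using minl[OF pqA] unfolding A'_def by simp
  qed
  define Out where "Out = fst ` M"
  define In where "In = snd ` M"
  have "M \<subseteq> V \<times> V" using M1 unfolding complete_arcs_def by blast
  then have finM: "finite M" using finV finite_subset by blast
  have injf: "inj_on fst M" unfolding inj_on_def using Mo by auto
  have injs: "inj_on snd M" unfolding inj_on_def using Mi by auto
  have cOut: "card Out = card M" unfolding Out_def using card_image[OF injf] .
  have cIn: "card In = card M" unfolding In_def using card_image[OF injs] .
  have OutV: "Out \<subseteq> V" unfolding Out_def using Mc by force
  have InV: "In \<subseteq> V" unfolding In_def using Mc by force
  have key: "p = q" if p: "p \<in> V - Out" and q: "q \<in> V - In" for p q
  proof (rule ccontr)
    assume "p \<noteq> q"
    then have "(p,q) \<in> complete_arcs V" using p q unfolding complete_arcs_def by auto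
    moreover have "(p,q) \<notin> M" using p unfolding Out_def by force
    ultimately have "(p,q) \<in> A" unfolding M_def by blast
    then show False using Max p q unfolding Out_def In_def by blast
  qed
  have cd: "card (V - Out) = card (V - In)"
    using OutV InV finV cOut cIn by (simp add: card_Diff_subset finite_subset)
  have OI: "Out = In \<and> card (V - Out) \<le> 1"
  proof (cases "V - Out = {}")
    case True
    then have "card (V - In) = 0" using cd by (metis card.empty)
    then have "V - In = {}" using finV by simp
    then show ?thesis using True OutV InV by auto
  next
    case False
    then obtain p where p: "p \<in> V - Out" by blast
    have s1: "V - In \<subseteq> {p}" using key[OF p] by blast
    have "card (V - Out) \<noteq> 0" using False finV by (meson card_0_eq finite_Diff)
    then have "card (V - In) \<noteq> 0" using cd by simp
    then have "V - In \<noteq> {}" by (metis card.empty)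
    then have e1: "V - In = {p}" using s1 by blast
    have "V - Out \<subseteq> {p}" using key e1 by blast
    then have e2: "V - Out = {p}" using p by blast
    have "Out = In" using e1 e2 OutV InV by blast
    then show ?thesis using e2 by simp
  qed
  define f where "f u = (if u \<in> Out then (THE v. (u,v) \<in> M) else u)" for u
  have fM: "(u, f u) \<in> M" if uO: "u \<in> Out" for u
  proof -
    obtain v where v: "(u,v) \<in> M" using uO unfolding Out_def by force
    have "(THE v. (u,v) \<in> M) = v" using v Mo by blast
    then show ?thesis using v uO unfolding f_def by simp
  qed
  have Mimg: "M = (\<lambda>u. (u, f u)) ` Out"
  proof (intro set_eqI iffI)
    fix e assume e: "e \<in> M"
    obtain u v where uv: "e = (u,v)" by fastforce
    have uO: "u \<in> Out" using e uv unfolding Out_def by force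
    have "f u = v" using Mo[OF fM[OF uO]] e uv by simp
    then show "e \<in> (\<lambda>u. (u, f u)) ` Out" using uO uv by blast
  next
    fix e assume "e \<in> (\<lambda>u. (u, f u)) ` Out"
    then show "e \<in> M" using fM by blast
  qed
  have perm: "f permutes Out"
  proof (rule bij_imp_permutes)
    show "bij_betw f Out Out" unfolding bij_betw_def
    proof
      show "inj_on f Out" unfolding inj_on_def
      proof (intro ballI impI)
        fix u u' assume "u \<in> Out" "u' \<in> Out" "f u = f u'"
        then show "u = u'" using fM Mi by metis
      qed
      show "f ` Out = Out"
      proof (intro set_eqI iffI)
        fix v assume "v \<in> f ` Out"
        then obtain u where "u \<in> Out" "v = f u" by blast
        then have "v \<in> In" unfolding In_def using fM by force
        then show "v \<in> Out" using OI by simp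
      next
        fix v assume "v \<in> Out"
        then have "v \<in> In" using OI by simp
        then obtain u where u: "(u,v) \<in> M" unfolding In_def by force
        then have uO: "u \<in> Out" unfolding Out_def by force
        have "f u = v" using Mo[OF fM[OF uO] u] .
        then show "v \<in> f ` Out" using uO by blast
      qed
    qed
  next
    fix x assume "x \<notin> Out" then show "f x = x" unfolding f_def by simp
  qed
  have nf: "f u \<noteq> u" if "u \<in> Out" for u using Mc[OF fM[OF that]] by metis
  have finOut: "finite Out" using OutV finV finite_subset by blast
  obtain C where C: "finite C" "\<forall>c\<in>C. is_cycle V c" "\<forall>c\<in>C. \<forall>c'\<in>C. c \<noteq> c' \<longrightarrow> set c \<inter> set c' = {}"
    "(\<Union>c\<in>C. cycle_arcs c) = (\<lambda>u. (u, f u)) ` Out" "(\<Union>c\<in>C. set c) = Out"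
    using cycles_from_perm[OF finOut perm nf OutV] by blast
  have "disjoint_cycles_cover V M"
    unfolding disjoint_cycles_cover_def
  proof (intro exI[of _ C] conjI)
    show "M = (\<Union>c\<in>C. cycle_arcs c)" using C(4) Mimg by simp
    show "card (V - (\<Union>c\<in>C. set c)) \<le> 1" using C(5) OI by metis
  qed (use C in auto)
  then show ?thesis using M1 AM by blast
qed

theorem theorem5p2:
  fixes V :: "'a set" and A :: "('a \<times> 'a) set"
  assumes "digraph V A" and "card V \<ge> 2"
  shows "min_strong_arc_conn V A 2 (card V - 2) \<longleftrightarrow>
         (\<exists>M. M \<subseteq> complete_arcs V \<and> A = complete_arcs V - M \<and> disjoint_cycles_cover V M)"
  using lr_dir[OF assms] rl_dir[OF assms] by blast

end
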